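(* Let $R>0$, $\mathbf{y}_1,\dots,\mathbf{y}_M\in\mathbb{R}^2$, and $\mathcal{N}'(r):=\sum_{l=1}^Mf(|\mathbf{y}_l|,r)$. If $R\le r_1\le r\le r_2$ with $r_2-r_1\le R/2$, then $$\mathcal{N}'(r_1)+\mathcal{N}'(r_2)\ge\mathcal{N}'(r).$$
   Context: For $d\ge0$, $r\ge0$: $f(d,r)=2r/R^2$ if $r\le R-d$; $f(d,r)=0$ if $r>R+d$ or $r<d-R$; $f(d,r)=\frac{2r}{\pi R^2}\arccos\big(\frac{d^2+r^2-R^2}{2dr}\big)$ otherwise. Thus $\mathcal{N}'$ is the derivative of the particle counting function $\mathcal{N}(r)=\sum_l|B_r(0)\cap B_R(\mathbf{y}_l)|/(\pi R^2)$. *)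

theory Defs
  imports "HOL-Analysis.Analysis"
begin

text \<open>Derivative kernel f(d,r) of the particle counting function (R fixed disc radius).\<close>
definition fker :: "real \<Rightarrow> real \<Rightarrow> real \<Rightarrow> real" where
  "fker R d r =
     (if r \<le> R - d then 2 * r / R\<^sup>2
      else if r > R + d \<or> r < d - R then 0
      else 2 * r / (pi * R\<^sup>2) * arccos ((d\<^sup>2 + r\<^sup>2 - R\<^sup>2) / (2 * d * r)))"

definition Nprime :: "real \<Rightarrow> (real^2) list \<Rightarrow> real \<Rightarrow> real" where
  "Nprime R ys r = (\<Sum>y\<leftarrow>ys. fker R (norm y) r)"

end

theory Submission
  imports Defs
begin
lemma sin_ge_xcos:
  fixes y :: real assumes "0 \<le> y" "y \<le> pi/2" shows "y * cos y \<le> sin y"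
proof -
  have "(\<lambda>y. sin y - y * cos y) 0 \<le> (\<lambda>y. sin y - y * cos y) y"
  proof (rule DERIV_nonneg_imp_nondecreasing[OF assms(1)])
    fix x assume x: "0 \<le> x" "x \<le> y"
    have "DERIV (\<lambda>y. sin y - y * cos y) x :> x * sin x"
      by (auto intro!: derivative_eq_intros simp: algebra_simps)
    moreover have "x * sin x \<ge> 0" using x assms by (intro mult_nonneg_nonneg sin_ge_zero) auto
    ultimately show "\<exists>z. DERIV (\<lambda>y. sin y - y * cos y) x :> z \<and> z \<ge> 0" by blast
  qed
  then show ?thesis by simp
qed

lemma sinc_mono:
  fixes a b :: real assumes "0 < a" "a \<le> b" "b \<le> pi/2" shows "a * sin b \<le> b * sin a"
proof -
  have "(\<lambda>y. sin y / y) b \<le> (\<lambda>y. sin y / y) a"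
  proof (rule DERIV_nonpos_imp_nonincreasing[OF assms(2)])
    fix x assume x: "a \<le> x" "x \<le> b"
    hence xp: "x > 0" using assms by auto
    have "DERIV (\<lambda>y. sin y / y) x :> (x * cos x - sin x) / x^2"
      using xp by (auto intro!: derivative_eq_intros simp: field_simps power2_eq_square)
    moreover have "(x * cos x - sin x) / x^2 \<le> 0"
      using sin_ge_xcos[of x] x assms xp by (intro divide_nonpos_nonneg) auto
    ultimately show "\<exists>z. DERIV (\<lambda>y. sin y / y) x :> z \<and> z \<le> 0" by blast
  qed
  then show ?thesis using assms by (simp add: field_simps)
qed

lemma half_bounds:
  fixes t :: real assumes "0 \<le> t" "t \<le> pi/2"
  shows "2 * sin (t/2) \<le> t" "t \<le> 5/2 * sin (t/2)"
proof -
  show "2 * sin (t/2) \<le> t" using sin_x_le_x[of "t/2"] assms by simp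
  show "t \<le> 5/2 * sin (t/2)"
  proof (cases "t = 0")
    case True then show ?thesis by simp
  next
    case False
    have "(t/2) * sin (pi/4) \<le> (pi/4) * sin (t/2)"
      using assms False by (intro sinc_mono) auto
    hence h: "t * sqrt 2 \<le> pi * sin (t/2)" by (simp add: sin_45 field_simps)
    have s2: "sqrt 2 \<ge> 1.4"
      by (rule real_le_rsqrt) (simp add: power2_eq_square)
    have sn: "sin (t/2) \<ge> 0" using assms by (intro sin_ge_zero) auto
    have "pi * sin (t/2) \<le> 3.5 * sin (t/2)" using pi_approx(2) sn by (intro mult_right_mono) auto
    also have "\<dots> \<le> (5/2 * sin (t/2)) * sqrt 2"
    proof -
      have "(5/2 * sin (t/2)) * 1.4 \<le> (5/2 * sin (t/2)) * sqrt 2" using s2 sn by (intro mult_left_mono) auto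
      thus ?thesis by simp
    qed
    finally have "t * sqrt 2 \<le> (5/2 * sin (t/2)) * sqrt 2" using h by linarith
    then show ?thesis by (simp add: mult_le_cancel_right)
  qed
qed

lemma unitP3:
  fixes a y z e :: real
  assumes "y = a + e" "y \<le> z" "z \<le> a + 1/2" "0 \<le> e" "e \<le> 1/2" "a < 5/12" "y^2 \<le> 1"
  shows "(25/16)*e^2*(1 - y^2) \<le> 1 - z^2"
proof -
  have e2: "e^2 \<le> 1/4" using power_mono[of e "1/2" 2] assms by (simp add: power2_eq_square)
  have y1: "0 \<le> 1 - y^2" using assms by simp
  show ?thesis
  proof (cases "z \<le> 0")
    case True
    have "z^2 \<le> y^2" using True assms by (subst abs_le_square_iff[symmetric]) auto
    moreover have "(25/16)*e^2*(1 - y^2) \<le> 1*(1-y^2)"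
      using e2 y1 by (intro mult_right_mono) auto
    ultimately show ?thesis by simp
  next
    case False
    have z1: "z < 11/12" using assms by simp
    have zz: "z^2 \<le> (11/12)*z" using False z1 by (simp add: power2_eq_square)
    have zb: "1 - z^2 \<ge> 23/144" using zz z1 by simp
    show ?thesis
    proof (cases "e \<le> 3/10")
      case True
      have "e^2 \<le> 9/100" using power_mono[of e "3/10" 2] True assms by (simp add: power2_eq_square)
      hence "(25/16)*e^2*(1 - y^2) \<le> (25/16)*(9/100)*1"
        using y1 assms by (intro mult_mono) auto
      then show ?thesis using zb by simp
    next
      case e3: False
      show ?thesis
      proof (cases "e \<le> 2/5")
        case True
        have "e^2 \<le> 4/25" using power_mono[of e "2/5" 2] True assms by (simp add: power2_eq_square)
        hence rh0: "(25/16)*e^2*(1 - y^2) \<le> (25/16)*(4/25)*(1-y^2)"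
          using y1 by (intro mult_right_mono) auto
        have rh: "(25/16)*e^2*(1 - y^2) \<le> 1/4 - (1/4)*y^2" using rh0 by (simp add: algebra_simps)
        have zy: "z < y + 1/5" using assms e3 by simp
        show ?thesis
        proof (cases "y \<le> 0")
          case True
          hence "z < 1/5" using zy by simp
          hence "z^2 \<le> (1/5)*z" using False by (simp add: power2_eq_square)
          hence "z^2 < 1/25" using \<open>z < 1/5\<close> by linarith
          then show ?thesis using rh zero_le_power2[of y] by linarith
        next
          case ypos: False
          show ?thesis
          proof (cases "y \<le> 13/20")
            case True
            have "y^2 \<le> (13/20)*y" using True ypos by (simp add: power2_eq_square)
            moreover have "z^2 \<le> (y+1/5)^2" using zy False assms by (intro power_mono) auto
            moreover have "(y+1/5)^2 = y^2 + 2*1/5*y + 1/5*1/5" by (simp add: power2_eq_square algebra_simps)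
            ultimately show ?thesis using rh True ypos by linarith
          next
            case False
            have "y^2 \<ge> 169/400" using power_mono[of "13/20" y 2] False by (simp add: power2_eq_square)
            then show ?thesis using rh zb by simp
          qed
        qed
      next
        case e4: False
        have rh0: "(25/16)*e^2*(1 - y^2) \<le> (25/16)*(1/4)*(1-y^2)"
          using y1 e2 by (intro mult_right_mono) auto
        have rh: "(25/16)*e^2*(1 - y^2) \<le> 25/64 - (25/64)*y^2" using rh0 by (simp add: algebra_simps)
        have zy: "z < y + 1/10" using assms e4 by simp
        show ?thesis
        proof (cases "y \<le> 0")
          case True
          hence "z < 1/10" using zy by simp
          hence "z^2 \<le> (1/10)*z" using False by (simp add: power2_eq_square)
          hence "z^2 < 1/100" using \<open>z < 1/10\<close> by linarith
          then show ?thesis using rh zero_le_power2[of y] by linarith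
        next
          case ypos: False
          show ?thesis
          proof (cases "y \<le> 4/5")
            case True
            have "y^2 \<le> (4/5)*y" using True ypos by (simp add: power2_eq_square)
            moreover have "z^2 \<le> (y+1/10)^2" using zy False assms by (intro power_mono) auto
            moreover have "(y+1/10)^2 = y^2 + 2*1/10*y + 1/10*1/10" by (simp add: power2_eq_square algebra_simps)
            ultimately show ?thesis using rh True ypos by linarith
          next
            case False
            have "y^2 \<ge> 16/25" using power_mono[of "4/5" y 2] False by (simp add: power2_eq_square)
            then show ?thesis using rh zb by simp
          qed
        qed
      qed
    qed
  qed
qed
lemma fker_nonneg:
  assumes R: "R > 0" and d: "d \<ge> 0" and rho: "\<rho> \<ge> 0"
  shows "fker R d \<rho> \<ge> 0"
proof -
  consider (a) "\<rho> \<le> R - d" | (b) "\<not> \<rho> \<le> R - d" "\<rho> > R + d \<or> \<rho> < d - R"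
    | (c) "\<not> \<rho> \<le> R - d" "\<not> (\<rho> > R + d \<or> \<rho> < d - R)" by blast
  then show ?thesis
  proof cases
    case a then show ?thesis using R rho unfolding fker_def by simp
  next
    case b then show ?thesis unfolding fker_def by simp
  next
    case c
    have dp: "d > 0" using c R by auto
    have rp: "\<rho> > 0" using c R by auto
    have h1: "(\<rho> - d)^2 \<le> R^2" using c R by (subst abs_le_square_iff[symmetric]) auto
    have h2: "R^2 \<le> (\<rho> + d)^2" using c R by (intro power_mono) auto
    have "-1 \<le> (d^2 + \<rho>^2 - R^2) / (2*d*\<rho>)" using dp rp h2
      by (simp add: field_simps power2_eq_square algebra_simps)
    moreover have "(d^2 + \<rho>^2 - R^2) / (2*d*\<rho>) \<le> 1" using dp rp h1
      by (simp add: field_simps power2_eq_square algebra_simps)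
    ultimately have "arccos ((d^2 + \<rho>^2 - R^2) / (2*d*\<rho>)) \<ge> 0" by (rule arccos_lbound)
    then show ?thesis using c rp unfolding fker_def by simp
  qed
qed

lemma point_pos:
  fixes R d r r1 r2 :: real
  assumes R: "R > 0" and dp: "d > 0"
    and h1: "R \<le> r1" and h2: "r1 < r" and h3: "r \<le> r2" and h4: "r2 - r1 \<le> R / 2"
  shows "fker R d r \<le> fker R d r1 + fker R d r2"
proof -
  define X where "X \<rho> = (d^2 + \<rho>^2 - R^2) / (2*d*\<rho>)" for \<rho>
  define th where "th \<rho> = (if \<rho> > R + d \<or> \<rho> < d - R then 0 else arccos (X \<rho>))" for \<rho>
  define T where "T \<rho> = (R^2 - (\<rho>-d)^2) / \<rho>" for \<rho>
  define sg where "sg \<rho> = sin (th \<rho> / 2)" for \<rho>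
  define p where "p = d^2 - R^2"
  have fk: "fker R d \<rho> = 2*\<rho>/(pi*R^2) * th \<rho>" if "R \<le> \<rho>" for \<rho>
    using that dp unfolding fker_def th_def X_def by auto
  have supp: "(\<not> (\<rho> > R + d \<or> \<rho> < d - R)) \<longleftrightarrow> T \<rho> \<ge> 0" if "R \<le> \<rho>" for \<rho>
  proof -
    have "(\<not> (\<rho> > R + d \<or> \<rho> < d - R)) \<longleftrightarrow> \<bar>\<rho> - d\<bar> \<le> \<bar>R\<bar>" using R by auto
    also have "\<dots> \<longleftrightarrow> (\<rho>-d)^2 \<le> R^2" by (rule abs_le_square_iff)
    also have "\<dots> \<longleftrightarrow> T \<rho> \<ge> 0" using that R unfolding T_def by (simp add: zero_le_divide_iff)
    finally show ?thesis .
  qed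
  have XT: "X \<rho> = 1 - T \<rho> / (2*d)" if "R \<le> \<rho>" for \<rho>
    using that R dp unfolding X_def T_def by (simp add: field_simps power2_eq_square)
  have Xr: "0 \<le> X \<rho> \<and> X \<rho> \<le> 1" if "R \<le> \<rho>" "T \<rho> \<ge> 0" for \<rho>
  proof
    have "R^2 \<le> \<rho>^2" using that R by (intro power_mono) auto
    then have "0 \<le> d^2 + \<rho>^2 - R^2" using zero_le_power2[of d] by linarith
    then show "0 \<le> X \<rho>" using that R dp unfolding X_def by (auto intro!: divide_nonneg_pos)
    show "X \<rho> \<le> 1" using XT[OF that(1)] that dp by simp
  qed
  have thr: "0 \<le> th \<rho> \<and> th \<rho> \<le> pi/2" if "R \<le> \<rho>" for \<rho>
  proof (cases "T \<rho> \<ge> 0")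
    case True
    then have "\<not> (\<rho> > R + d \<or> \<rho> < d - R)" using supp[OF that] by simp
    then show ?thesis using Xr[OF that True] arccos_lbound[of "X \<rho>"] arccos_le_pi2[of "X \<rho>"]
      unfolding th_def by auto
  next
    case False
    then have "\<rho> > R + d \<or> \<rho> < d - R" using supp[OF that] by simp
    then show ?thesis unfolding th_def by simp
  qed
  have th0: "th \<rho> = 0" if "R \<le> \<rho>" "T \<rho> < 0" for \<rho>
    using supp[OF that(1)] that(2) unfolding th_def by auto
  have sgsq: "(sg \<rho>)^2 = T \<rho> / (4*d)" if "R \<le> \<rho>" "T \<rho> \<ge> 0" for \<rho>
  proof -
    have "\<not> (\<rho> > R + d \<or> \<rho> < d - R)" using supp[OF that(1)] that(2) by simp
    then have "cos (th \<rho>) = X \<rho>" using Xr[OF that] unfolding th_def by simp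
    moreover have "cos (th \<rho>) = 1 - 2 * (sg \<rho>)^2"
      using cos_double_sin[of "th \<rho> / 2"] unfolding sg_def by simp
    ultimately show ?thesis using XT[OF that(1)] dp by (simp add: field_simps)
  qed
  have sgnn: "sg \<rho> \<ge> 0" if "R \<le> \<rho>" for \<rho>
    using thr[OF that] unfolding sg_def by (intro sin_ge_zero) auto
  have lowb: "2 * sg \<rho> \<le> th \<rho>" and upb: "th \<rho> \<le> 5/2 * sg \<rho>" if "R \<le> \<rho>" for \<rho>
    using half_bounds[of "th \<rho>"] thr[OF that] unfolding sg_def by auto
  have mono: "th a \<le> th b" if "R \<le> a" "R \<le> b" "T a \<ge> 0" "T a \<le> T b" for a b
  proof -
    have Tb: "T b \<ge> 0" using that by simp
    have "\<not> (a > R + d \<or> a < d - R)" "\<not> (b > R + d \<or> b < d - R)"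
      using supp[OF that(1)] supp[OF that(2)] that Tb by auto
    moreover have "X b \<le> X a" using XT[OF that(1)] XT[OF that(2)] that dp
      by (simp add: divide_right_mono)
    ultimately show ?thesis unfolding th_def
      using Xr[OF that(1,3)] Xr[OF that(2) Tb] by (auto intro!: arccos_le_arccos)
  qed
  have Tdiff: "T b - T a = (b - a) * (p - a*b) / (a*b)" if "a > 0" "b > 0" for a b
    using that unfolding T_def p_def by (simp add: field_simps power2_eq_square)
  have rT: "\<rho>^2 * T \<rho> = \<rho> * (R^2 - (\<rho>-d)^2)" if "\<rho> > 0" for \<rho>
    using that unfolding T_def by (simp add: power2_eq_square)
  have sqle: "cc * ww \<le> uu" if "(cc*ww)^2 \<le> uu^2" "0 \<le> uu" for cc ww uu :: real
    using power2_le_imp_le[OF that] .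
  have Rr: "R \<le> r" "R \<le> r2" "R < r" using h1 h2 h3 by auto
  have pos: "r1 > 0" "r > 0" "r2 > 0" using R Rr h1 by auto
  define c where "c = 2/(pi*R^2)"
  have cp: "c > 0" using R unfolding c_def by simp
  have fks: "fker R d r1 = c * (r1 * th r1)" "fker R d r = c * (r * th r)" "fker R d r2 = c * (r2 * th r2)"
    using fk[OF h1] fk[OF Rr(1)] fk[OF Rr(2)] unfolding c_def by (simp_all add: field_simps)
  have tn: "0 \<le> th r1" "0 \<le> th r" "0 \<le> th r2" using thr h1 Rr by auto
  have main: "r * th r \<le> r1 * th r1 + r2 * th r2"
  proof (cases "T r \<ge> 0")
    case False
    then have "th r = 0" using th0[OF Rr(1)] by simp
    then show ?thesis using tn pos by simp
  next
    case Tr: True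
    show ?thesis
    proof (cases "p \<ge> r * r2")
      case True
      have "T r2 - T r \<ge> 0" unfolding Tdiff[OF pos(2,3)] using True h3 pos
        by (intro divide_nonneg_pos mult_nonneg_nonneg) auto
      then have "th r \<le> th r2" using mono[OF Rr(1) Rr(2) Tr] by simp
      then have "r * th r \<le> r2 * th r2" using h3 tn pos by (intro mult_mono) auto
      moreover have "0 \<le> r1 * th r1" using tn pos by simp
      ultimately show ?thesis by linarith
    next
      case notA: False
      show ?thesis
      proof (cases "p \<le> r * r1")
        case True
        have "T r - T r1 \<le> 0" unfolding Tdiff[OF pos(1,2)] using True h2 pos
          by (intro divide_nonpos_pos mult_nonneg_nonpos) (auto simp: mult.commute)
        then have thle: "th r \<le> th r1" using mono[OF Rr(1) h1 Tr] by simp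
        show ?thesis
        proof (cases "r1 - d \<ge> 5*R/12")
          case True
          have "r * ((r - d) + (r1 - d)) \<ge> R * (5*R/6)" using True h2 Rr R
            by (intro mult_mono) auto
          moreover have "(r1-d)^2 \<ge> (5*R/12)^2" using True R by (intro power_mono) auto
          ultimately have "r * ((r - d) + (r1 - d)) + (r1-d)^2 - R^2 \<ge> 0"
            using mult_pos_pos[OF R R] by (simp add: power2_eq_square)
          moreover have "r1 * (R^2 - (r1-d)^2) - r * (R^2 - (r-d)^2)
              = (r - r1) * (r * ((r - d) + (r1 - d)) + (r1-d)^2 - R^2)"
            by (simp add: power2_eq_square algebra_simps)
          ultimately have "r1 * (R^2 - (r1-d)^2) - r * (R^2 - (r-d)^2) \<ge> 0"
            using h2 by simp
          then have Q: "r^2 * T r \<le> r1^2 * T r1" using rT pos by simp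
          have T1: "T r1 \<ge> 0" using Tr thle \<open>T r - T r1 \<le> 0\<close> by simp
          have "(r * sg r)^2 \<le> (r1 * sg r1)^2"
            using Q sgsq[OF Rr(1) Tr] sgsq[OF h1 T1] dp
            by (simp add: power_mult_distrib divide_right_mono)
          then have rs: "r * sg r \<le> r1 * sg r1"
            using sqle[of r "sg r" "r1 * sg r1"] sgnn[OF h1] pos by simp
          show ?thesis
          proof (cases "th r = 0")
            case True then show ?thesis using tn pos by simp
          next
            case False
            then have thp: "th r > 0" using tn by simp
            have rat: "(th r / 2) * sin (th r1 / 2) \<le> (th r1 / 2) * sin (th r / 2)"
              using thp thle thr[OF h1] by (intro sinc_mono) auto
            then have rat': "th r * sg r1 \<le> th r1 * sg r" unfolding sg_def by simp
            have sgp: "sg r > 0" using upb[OF Rr(1)] thp by simp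
            have sg1p: "sg r1 > 0"
            proof -
              have "r * sg r > 0" using sgp pos by simp
              then have "r1 * sg r1 > 0" using rs by simp
              then show ?thesis using pos by (simp add: zero_less_mult_iff)
            qed
            have "(r * th r) * sg r1 = r * (th r * sg r1)" by simp
            also have "\<dots> \<le> r * (th r1 * sg r)" using rat' pos by (intro mult_left_mono) auto
            also have "\<dots> = th r1 * (r * sg r)" by simp
            also have "\<dots> \<le> th r1 * (r1 * sg r1)" using rs tn by (intro mult_left_mono) auto
            also have "\<dots> = (r1 * th r1) * sg r1" by simp
            finally have "r * th r \<le> r1 * th r1" using sg1p by simp
            moreover have "0 \<le> r2 * th r2" using tn pos by simp
            ultimately show ?thesis by linarith
          qed
        next
          case False
          define a where "a = (r1 - d)/R"
          define e where "e = (r - r1)/R"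
          define y where "y = (r - d)/R"
          define z where "z = (r2 - d)/R"
          have "(r-d)^2 \<le> R^2" using Tr pos unfolding T_def by (simp add: zero_le_divide_iff)
          then have y2: "y^2 \<le> 1" unfolding y_def using R by (simp add: power_divide)
          have uA: "(25/16)*e^2*(1 - y^2) \<le> 1 - z^2"
            apply (rule unitP3[of y a e z])
            using R h2 h3 h4 False y2 unfolding a_def e_def y_def z_def
            by (auto simp: field_simps)
          have eq1: "(25/16)*e^2*(1-y^2) = ((25/16)*(r-r1)^2*(R^2-(r-d)^2)) / R^4"
            unfolding e_def y_def using R by (simp add: field_simps power2_eq_square power4_eq_xxxx)
          have eq2: "1 - z^2 = (R^2 - (r2-d)^2) / R^2"
            unfolding z_def using R by (simp add: field_simps power2_eq_square)
          have "((25/16)*(r-r1)^2*(R^2-(r-d)^2)) / R^4 \<le> (R^2 - (r2-d)^2) / R^2"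
            using uA eq1 eq2 by metis
          then have "((25/16)*(r-r1)^2*(R^2-(r-d)^2)) / R^4 * R^4 \<le> (R^2 - (r2-d)^2) / R^2 * R^4"
            using R by (intro mult_right_mono) auto
          then have "(25/16)*(r-r1)^2*(R^2 - (r-d)^2) \<le> R^2 * (R^2 - (r2-d)^2)"
            using R by (simp add: power2_eq_square power4_eq_xxxx) (simp add: ac_simps)
          define K where "K = (25/16)*(r-r1)^2*(R^2 - (r-d)^2)"
          have K0: "K \<ge> 0" unfolding K_def using \<open>(r-d)^2 \<le> R^2\<close> by simp
          have KR: "K \<le> R^2 * (R^2 - (r2-d)^2)" unfolding K_def by fact
          have "0 \<le> R^2 * (R^2 - (r2-d)^2)" using K0 KR by linarith
          then have W0: "R^2 - (r2-d)^2 \<ge> 0"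
            using R by (simp add: zero_le_mult_iff)
          have "R * R \<le> r * r2" using Rr R by (intro mult_mono) auto
          then have "R^2 * (R^2 - (r2-d)^2) \<le> (r * r2) * (R^2 - (r2-d)^2)"
            using W0 by (intro mult_right_mono) (auto simp: power2_eq_square)
          then have KW: "K \<le> r * (r2 * (R^2 - (r2-d)^2))" using KR by simp
          have T2: "r2^2 * T r2 \<ge> (25/16)*(r-r1)^2 * T r"
          proof -
            have "(25/16)*(r-r1)^2 * T r = K / r" unfolding K_def T_def by simp
            also have "\<dots> \<le> r2 * (R^2 - (r2-d)^2)" using KW pos by (simp add: divide_le_eq mult.commute)
            also have "\<dots> = r2^2 * T r2" using rT pos by simp
            finally show ?thesis .
          qed
          have T2n: "T r2 \<ge> 0"
          proof -
            have "(25/16)*(r-r1)^2 * T r \<ge> 0" using Tr by simp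
            then have "r2^2 * T r2 \<ge> 0" using T2 by linarith
            then show ?thesis using pos by (simp add: zero_le_mult_iff)
          qed
          have "(5/4 * (r - r1) * sg r)^2 \<le> (r2 * sg r2)^2"
          proof -
            have "(5/4 * (r - r1) * sg r)^2 = (25/16)*(r-r1)^2 * (sg r)^2"
              by (simp add: power2_eq_square field_simps)
            also have "\<dots> = (25/16)*(r-r1)^2 * T r / (4*d)"
              using sgsq[OF Rr(1) Tr] by simp
            also have "\<dots> \<le> r2^2 * T r2 / (4*d)" by (rule divide_right_mono[OF T2]) (use dp in simp)
            also have "\<dots> = (r2 * sg r2)^2" using sgsq[OF Rr(2) T2n] by (simp add: power_mult_distrib)
            finally show ?thesis .
          qed
          then have s2: "5/4 * (r - r1) * sg r \<le> r2 * sg r2"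
            using sqle[of 1 "5/4 * (r - r1) * sg r" "r2 * sg r2"] sgnn[OF Rr(2)] pos by simp
          have "(r - r1) * th r \<le> (r - r1) * (5/2 * sg r)" using upb[OF Rr(1)] h2 by (intro mult_left_mono) auto
          also have "\<dots> \<le> r2 * (2 * sg r2)" using s2 by (simp add: algebra_simps)
          also have "\<dots> \<le> r2 * th r2" using lowb[OF Rr(2)] pos by (intro mult_left_mono) auto
          finally have A: "(r - r1) * th r \<le> r2 * th r2" .
          have B: "r1 * th r \<le> r1 * th r1" using thle pos by (intro mult_left_mono) auto
          have "r * th r = r1 * th r + (r - r1) * th r" by (simp add: algebra_simps)
          then show ?thesis using A B by simp
        qed
      next
        case ii: False
        have rr1: "R * R \<le> r * r1" using Rr h1 R by (intro mult_mono) auto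
        have pp: "p > R^2" using ii rr1 unfolding power2_eq_square by linarith
        define s where "s = sqrt p"
        have p0: "p \<ge> 0" using pp zero_le_power2[of R] by linarith
        have s2: "s^2 = p" unfolding s_def using p0 by simp
        have sn: "s \<ge> 0" unfolding s_def using p0 by simp
        have sR: "R < s"
        proof -
          have "R^2 < s^2" using pp s2 by simp
          then show ?thesis using sn by (rule power2_less_imp_less)
        qed
        have r1s: "r1 < s"
        proof -
          have "r1 * r1 \<le> r * r1" using h2 pos by (intro mult_right_mono) auto
          then have "r1^2 < s^2" using ii s2 unfolding power2_eq_square by linarith
          then show ?thesis using sn by (rule power2_less_imp_less)
        qed
        have sr2: "s < r2"
        proof -
          have "r * r2 \<le> r2 * r2" using h3 pos by (intro mult_right_mono) auto
          then have "s^2 < r2^2" using notA s2 unfolding power2_eq_square by linarith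
          then show ?thesis by (rule power2_less_imp_less) (use pos in simp)
        qed
        have "(d - s) * (d + s) = d^2 - s^2" by (simp add: algebra_simps power2_eq_square)
        then have dsR: "(d - s) * (d + s) = R^2" using s2 unfolding p_def by linarith
        have dsp: "d + s > 0" using dp sn by simp
        define Tm where "Tm = 2 * (d - s)"
        have Tid: "T \<rho> = Tm - (\<rho> - s)^2 / \<rho>" if "\<rho> > 0" for \<rho>
        proof -
          have a1: "R^2 - (\<rho>-d)^2 = R^2 - \<rho>^2 + 2*\<rho>*d - d^2" by (simp add: power2_eq_square algebra_simps)
          have a2: "2*(d-s)*\<rho> - (\<rho>-s)^2 = 2*d*\<rho> - \<rho>^2 - s^2" by (simp add: power2_eq_square algebra_simps)
          have a3: "R^2 - (\<rho>-d)^2 = 2*(d-s)*\<rho> - (\<rho>-s)^2" using a1 a2 s2 unfolding p_def by (simp add: algebra_simps)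
          have "T \<rho> = (2*(d-s)*\<rho> - (\<rho>-s)^2) / \<rho>" unfolding T_def a3 ..
          also have "\<dots> = Tm - (\<rho> - s)^2 / \<rho>" using that unfolding Tm_def by (simp add: diff_divide_distrib)
          finally show ?thesis .
        qed
        have Trm: "T r \<le> Tm" using Tid[OF pos(2)] pos by simp
        have ds: "d \<le> s + R/2"
        proof -
          have q1: "R * R \<le> s * R" using sR R by (simp add: mult_right_mono)
          have q2: "d * d = s * s + R * R" using s2 unfolding p_def by (simp add: power2_eq_square)
          have q3: "(s + R/2) * (s + R/2) = s * s + s * R + R * R / 4" by (simp add: algebra_simps)
          have "d^2 \<le> (s + R/2)^2" unfolding power2_eq_square using q1 q2 q3 mult_pos_pos[OF R R] by linarith
          then show ?thesis by (rule power2_le_imp_le) (use sn R in simp)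
        qed
        have Tm_eq: "Tm = 2 * R^2 / (d + s)" unfolding Tm_def using dsR dsp
          by (simp add: field_simps)
        have key: "T \<rho> \<ge> 9/16 * Tm" if "\<rho> > 0" "8 * (\<rho> - s)^2 * (d + s) \<le> 7 * R^2 * \<rho>" for \<rho>
        proof -
          have f1: "(\<rho> - s)^2 * (8 * (d + s)) = 8 * (\<rho> - s)^2 * (d + s)" by (simp add: algebra_simps)
          have "(\<rho> - s)^2 * (8 * (d + s)) \<le> 7 * R^2 * \<rho>" using that(2) f1 by linarith
          then have "(\<rho> - s)^2 \<le> 7 * R^2 * \<rho> / (8 * (d + s))" using dsp by (simp add: pos_le_divide_eq)
          then have "(\<rho> - s)^2 \<le> (7 * R^2 / (8 * (d + s))) * \<rho>" by simp
          then have "(\<rho> - s)^2 / \<rho> \<le> 7 * R^2 / (8 * (d + s))" using that(1) by (simp add: pos_divide_le_eq)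
          also have "\<dots> = 7/16 * Tm" unfolding Tm_eq using dsp by (simp add: field_simps)
          finally show ?thesis using Tid[OF that(1)] by simp
        qed
        have k1: "8 * (r1 - s)^2 * (d + s) \<le> 7 * R^2 * r1"
        proof -
          have yb: "(r1 - s)^2 \<le> (R/2)^2" using r1s sr2 h3 h4 R
            by (subst abs_le_square_iff[symmetric]) auto
          have "d + s \<le> 2 * r1 + 3*R/2" using ds r1s sr2 h4 by simp
          then have "8 * (r1 - s)^2 * (d + s) \<le> 8 * (R/2)^2 * (2 * r1 + 3*R/2)"
            using yb dsp by (intro mult_mono) auto
          also have "\<dots> \<le> 7 * R^2 * r1" using h1 R by (simp add: power2_eq_square algebra_simps)
          finally show ?thesis .
        qed
        have k2: "8 * (r2 - s)^2 * (d + s) \<le> 7 * R^2 * r2"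
        proof -
          have yb: "(r2 - s)^2 \<le> (R/2)^2" using r1s sr2 h3 h4 R
            by (subst abs_le_square_iff[symmetric]) auto
          have "d + s \<le> 2 * r2 + R/2" using ds sr2 by simp
          then have "8 * (r2 - s)^2 * (d + s) \<le> 8 * (R/2)^2 * (2 * r2 + R/2)"
            using yb dsp by (intro mult_mono) auto
          also have "\<dots> \<le> 7 * R^2 * r2" using Rr R by (simp add: power2_eq_square algebra_simps)
          finally show ?thesis .
        qed
        have b1: "T r1 \<ge> 9/16 * T r" using key[OF pos(1) k1] Trm by simp
        have b2: "T r2 \<ge> 9/16 * T r" using key[OF pos(3) k2] Trm by simp
        have sgb: "3/4 * sg r \<le> sg \<rho>" if "R \<le> \<rho>" "T \<rho> \<ge> 9/16 * T r" for \<rho>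
        proof -
          have "9/16 * T r \<ge> 0" using Tr by simp
          then have Tn: "T \<rho> \<ge> 0" using that(2) by linarith
          have "(3/4 * sg r)^2 = 9/16 * (sg r)^2"
            by (simp add: power_mult_distrib power_divide)
          also have "\<dots> = 9/16 * T r / (4*d)"
            using sgsq[OF Rr(1) Tr] by simp
          also have "\<dots> \<le> T \<rho> / (4*d)" by (rule divide_right_mono[OF that(2)]) (use dp in simp)
          also have "\<dots> = (sg \<rho>)^2" using sgsq[OF that(1) Tn] by simp
          finally show ?thesis using sgnn[OF that(1)] by (rule power2_le_imp_le)
        qed
        have t1: "3/2 * sg r \<le> th r1" using sgb[OF h1 b1] lowb[OF h1] by simp
        have t2: "3/2 * sg r \<le> th r2" using sgb[OF Rr(2) b2] lowb[OF Rr(2)] by simp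
        have c1: "r1 * (3/2 * sg r) \<le> r1 * th r1" using t1 pos by (intro mult_left_mono) auto
        have c2: "r2 * (3/2 * sg r) \<le> r2 * th r2" using t2 pos by (intro mult_left_mono) auto
        note c1 c2
        moreover have "r * th r \<le> r * (5/2 * sg r)" using upb[OF Rr(1)] pos by (intro mult_left_mono) auto
        moreover have "5/3 * r \<le> r1 + r2" using h1 h2 h3 h4 R by simp
        moreover have "0 \<le> sg r" using sgnn[OF Rr(1)] .
        ultimately have "r * th r \<le> 3/2 * sg r * (r1 + r2)"
        proof -
          assume a1: "r1 * (3/2 * sg r) \<le> r1 * th r1" and a2: "r2 * (3/2 * sg r) \<le> r2 * th r2"
            and a3: "r * th r \<le> r * (5/2 * sg r)" and a4: "5/3 * r \<le> r1 + r2" and a5: "0 \<le> sg r"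
          have "r * (5/2 * sg r) = 3/2 * sg r * (5/3 * r)" by simp
          also have "\<dots> \<le> 3/2 * sg r * (r1 + r2)" using a4 a5 by (intro mult_left_mono) auto
          finally show ?thesis using a3 by simp
        qed
        moreover have "3/2 * sg r * (r1 + r2) = r1 * (3/2 * sg r) + r2 * (3/2 * sg r)" by (simp add: algebra_simps)
        ultimately show ?thesis using c1 c2 by linarith
      qed
    qed
  qed
  show ?thesis using main cp unfolding fks by (simp add: distrib_left[symmetric] mult_left_mono)
qed

lemma point:
  fixes R d r r1 r2 :: real
  assumes R: "R > 0" and d: "d \<ge> 0"
    and h1: "R \<le> r1" and h2: "r1 \<le> r" and h3: "r \<le> r2" and h4: "r2 - r1 \<le> R / 2"
  shows "fker R d r \<le> fker R d r1 + fker R d r2"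
proof (cases "r = r1")
  case True
  then show ?thesis using fker_nonneg[OF R d, of r2] R h1 h3 by simp
next
  case False
  then have lt: "r1 < r" using h2 by simp
  have n1: "fker R d r1 \<ge> 0" "fker R d r2 \<ge> 0" using fker_nonneg[OF R d] R h1 h2 h3 by auto
  show ?thesis
  proof (cases "d = 0")
    case True
    have "r > R" using lt h1 by simp
    then have "fker R d r = 0" using True unfolding fker_def by simp
    then show ?thesis using n1 by simp
  next
    case False
    then have "d > 0" using d by simp
    then show ?thesis using point_pos[OF R _ h1 lt h3 h4] by simp
  qed
qed

theorem lemma4p9:
  fixes R r r1 r2 :: real and ys :: "(real^2) list"
  assumes "R > 0"
    and "R \<le> r1" and "r1 \<le> r" and "r \<le> r2"
    and "r2 - r1 \<le> R / 2"
  shows "Nprime R ys r1 + Nprime R ys r2 \<ge> Nprime R ys r"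
proof (induction ys)
  case Nil
  then show ?case by (simp add: Nprime_def)
next
  case (Cons y ys)
  have "fker R (norm y) r \<le> fker R (norm y) r1 + fker R (norm y) r2"
    using point[OF assms(1) norm_ge_zero assms(2-5)] .
  then show ?case using Cons by (simp add: Nprime_def)
qed

end
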